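(* Let $F:\mathcal{G}_{\Sigma,\Delta,\pi}\to\mathcal{G}_{\Sigma,\Delta,\pi}$ be a causal graph dynamics. For every renaming $R$, $F$ admits at least one conjugate renaming $R'$, i.e. $F\circ R=R'\circ F$. Moreover, for any local rule $f$ of $F$ and any renaming $R$, $\mathrm{Conj}_f(R)\subseteq\mathrm{Conj}_F(R)$.
   Context: Fix an uncountably infinite set $\mathcal{V}$. For sets $\Sigma,\Delta$ and finite $\pi$, a graph $G$: countable $V(G)\subset\mathcal{V}$, a set $E(G)$ of pairwise disjoint two-element subsets of $V(G)\times\pi$ (write $u\!:\!i$), partial labelings $\sigma(G):V(G)\rightharpoonup\Sigma$, $\delta(G):E(G)\rightharpoonup\Delta$; $\mathcal{G}_{\Sigma,\Delta,\pi}$ the set of graphs. A renaming is a bijection $R:\mathcal{V}\to\mathcal{V}$, acting on edges by $R(\{u\!:\!i,v\!:\!j\})=\{R(u)\!:\!i,R(v)\!:\!j\}$, on graphs by $V(R(G))=R(V(G))$, $E(R(G))=R(E(G))$, $\sigma(R(G))=\sigma(G)\circ R^{-1}$, $\delta(R(G))=\delta(G)\circ R^{-1}$, and on pointed graphs by $R(G,v)=(R(G),R(v))$. Consistency: edge sets jointly pairwise disjoint, labelings agree on common domains; union/intersection componentwise; $\varnothing$ empty graph. Disk $G^r_c=(H,c)$: $V(H)=B_G(c,r+1)$ (shortest-path ball), $E(H)$ edges of $G$ with an endpoint in $B_G(c,r)$, $\sigma(H)=\sigma(G)|_{B_G(c,r)}$, $\delta(H)=\delta(G)|_{E(H)}$;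 $\mathcal{D}^r$ set of radius-$r$ disks. A local rule of radius $r$ is $f:\mathcal{D}^r\to\mathcal{G}$ with (1) for each renaming $R$ a renaming $R'$ with $f\circ R=R'\circ f$; (2) families of disks with empty intersection have images with empty intersection; (3) $|V(f(D))|$ uniformly bounded; (4) $f(G^r_u),f(G^r_v)$ consistent for all $G$ and $u,v\in V(G)$. A CGD is $F(G)=\bigcup_{v\in V(G)}f(G^r_v)$ for some local rule $f$ (a local rule of $F$). For a map $X$ (either $F$ or $f$) and renaming $R$, $\mathrm{Conj}_X(R)$ is the set of renamings $R'$ with $X\circ R=R'\circ X$. *)

theory Defs
  imports Main "HOL-Library.Countable_Set"
begin

text \<open>Graphs over vertex universe 'v, vertex labels 's (Sigma), edge labels 'd (Delta),
  ports 'p (the finite set pi). A port u:i is the pair (u,i).\<close>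

record ('v,'s,'d,'p) graph =
  gV :: "'v set"
  gE :: "('v \<times> 'p) set set"
  gsig :: "'v \<Rightarrow> 's option"
  gdel :: "('v \<times> 'p) set \<Rightarrow> 'd option"

definition is_graph :: "('v,'s,'d,'p::finite) graph \<Rightarrow> bool" where
  "is_graph G \<longleftrightarrow> countable (gV G)
     \<and> (\<forall>e\<in>gE G. \<exists>a b. a \<noteq> b \<and> e = {a, b} \<and> a \<in> gV G \<times> UNIV \<and> b \<in> gV G \<times> UNIV)
     \<and> (\<forall>e\<in>gE G. \<forall>e'\<in>gE G. e \<noteq> e' \<longrightarrow> e \<inter> e' = {})
     \<and> dom (gsig G) \<subseteq> gV G \<and> dom (gdel G) \<subseteq> gE G"

definition empty_graph :: "('v,'s,'d,'p) graph" where
  "empty_graph = \<lparr>gV = {}, gE = {}, gsig = Map.empty, gdel = Map.empty\<rparr>"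

definition rename_edge :: "('v \<Rightarrow> 'v) \<Rightarrow> ('v \<times> 'p) set \<Rightarrow> ('v \<times> 'p) set" where
  "rename_edge R e = (\<lambda>(u, i). (R u, i)) ` e"

definition rename :: "('v \<Rightarrow> 'v) \<Rightarrow> ('v,'s,'d,'p) graph \<Rightarrow> ('v,'s,'d,'p) graph" where
  "rename R G = \<lparr>gV = R ` gV G, gE = rename_edge R ` gE G,
                  gsig = gsig G \<circ> inv R, gdel = gdel G \<circ> rename_edge (inv R)\<rparr>"

definition rename_pt :: "('v \<Rightarrow> 'v) \<Rightarrow> ('v,'s,'d,'p) graph \<times> 'v \<Rightarrow> ('v,'s,'d,'p) graph \<times> 'v" where
  "rename_pt R D = (rename R (fst D), R (snd D))"

definition consistent :: "('v,'s,'d,'p) graph \<Rightarrow> ('v,'s,'d,'p) graph \<Rightarrow> bool" where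
  "consistent G H \<longleftrightarrow>
     (\<forall>e\<in>gE G. \<forall>e'\<in>gE H. e \<noteq> e' \<longrightarrow> e \<inter> e' = {})
   \<and> (\<forall>x a b. gsig G x = Some a \<and> gsig H x = Some b \<longrightarrow> a = b)
   \<and> (\<forall>x a b. gdel G x = Some a \<and> gdel H x = Some b \<longrightarrow> a = b)"

definition gunion :: "('v,'s,'d,'p) graph set \<Rightarrow> ('v,'s,'d,'p) graph" where
  "gunion S = \<lparr>gV = \<Union>(gV ` S), gE = \<Union>(gE ` S),
     gsig = (\<lambda>x. if \<exists>H\<in>S. gsig H x \<noteq> None
                 then gsig (SOME H. H \<in> S \<and> gsig H x \<noteq> None) x else None),
     gdel = (\<lambda>x. if \<exists>H\<in>S. gdel H x \<noteq> None
                 then gdel (SOME H. H \<in> S \<and> gdel H x \<noteq> None) x else None)\<rparr>"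

definition ginter :: "('v,'s,'d,'p) graph set \<Rightarrow> ('v,'s,'d,'p) graph" where
  "ginter S = \<lparr>gV = \<Inter>(gV ` S), gE = \<Inter>(gE ` S),
     gsig = (\<lambda>x. if \<forall>H\<in>S. gsig H x = gsig (SOME H. H \<in> S) x
                 then gsig (SOME H. H \<in> S) x else None),
     gdel = (\<lambda>x. if \<forall>H\<in>S. gdel H x = gdel (SOME H. H \<in> S) x
                 then gdel (SOME H. H \<in> S) x else None)\<rparr>"

definition adj :: "('v,'s,'d,'p) graph \<Rightarrow> ('v \<times> 'v) set" where
  "adj G = {(u, v). \<exists>i j. {(u, i), (v, j)} \<in> gE G}"

definition ball :: "('v,'s,'d,'p) graph \<Rightarrow> 'v \<Rightarrow> nat \<Rightarrow> 'v set" where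
  "ball G c n = {v. \<exists>k\<le>n. (c, v) \<in> adj G ^^ k}"

definition disk :: "nat \<Rightarrow> ('v,'s,'d,'p) graph \<Rightarrow> 'v \<Rightarrow> ('v,'s,'d,'p) graph \<times> 'v" where
  "disk r G c =
     (let EH = {e \<in> gE G. \<exists>u i. (u, i) \<in> e \<and> u \<in> ball G c r} in
      (\<lparr>gV = ball G c (Suc r), gE = EH,
         gsig = gsig G |` ball G c r, gdel = gdel G |` EH\<rparr>, c))"

definition disks :: "nat \<Rightarrow> (('v,'s,'d,'p::finite) graph \<times> 'v) set" where
  "disks r = {disk r G c | G c. is_graph G \<and> c \<in> gV G}"

definition local_rule :: "nat \<Rightarrow> (('v,'s,'d,'p::finite) graph \<times> 'v \<Rightarrow> ('v,'s,'d,'p) graph) \<Rightarrow> bool" where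
  "local_rule r f \<longleftrightarrow>
     (\<forall>D\<in>disks r. is_graph (f D))
   \<and> (\<forall>R. bij R \<longrightarrow> (\<exists>R'. bij R' \<and> (\<forall>D\<in>disks r. f (rename_pt R D) = rename R' (f D))))
   \<and> (\<forall>S. S \<subseteq> disks r \<and> S \<noteq> {} \<and> ginter (fst ` S) = empty_graph
          \<longrightarrow> ginter (f ` S) = empty_graph)
   \<and> (\<exists>b::nat. \<forall>D\<in>disks r. finite (gV (f D)) \<and> card (gV (f D)) \<le> b)
   \<and> (\<forall>G u v. is_graph G \<and> u \<in> gV G \<and> v \<in> gV G \<longrightarrow> consistent (f (disk r G u)) (f (disk r G v)))"

definition cgd_of :: "nat \<Rightarrow> (('v,'s,'d,'p) graph \<times> 'v \<Rightarrow> ('v,'s,'d,'p) graph)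
                      \<Rightarrow> ('v,'s,'d,'p) graph \<Rightarrow> ('v,'s,'d,'p) graph" where
  "cgd_of r f G = gunion ((\<lambda>v. f (disk r G v)) ` gV G)"

definition local_rule_of :: "(('v,'s,'d,'p::finite) graph \<Rightarrow> ('v,'s,'d,'p) graph) \<Rightarrow> nat
      \<Rightarrow> (('v,'s,'d,'p) graph \<times> 'v \<Rightarrow> ('v,'s,'d,'p) graph) \<Rightarrow> bool" where
  "local_rule_of F r f \<longleftrightarrow> local_rule r f \<and> (\<forall>G. is_graph G \<longrightarrow> F G = cgd_of r f G)"

definition is_CGD :: "(('v,'s,'d,'p::finite) graph \<Rightarrow> ('v,'s,'d,'p) graph) \<Rightarrow> bool" where
  "is_CGD F \<longleftrightarrow> (\<exists>r f. local_rule_of F r f)"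

definition conjF :: "(('v,'s,'d,'p::finite) graph \<Rightarrow> ('v,'s,'d,'p) graph) \<Rightarrow> ('v \<Rightarrow> 'v) \<Rightarrow> ('v \<Rightarrow> 'v) set" where
  "conjF F R = {R'. bij R' \<and> (\<forall>G. is_graph G \<longrightarrow> F (rename R G) = rename R' (F G))}"

definition conjf :: "nat \<Rightarrow> (('v,'s,'d,'p::finite) graph \<times> 'v \<Rightarrow> ('v,'s,'d,'p) graph)
                     \<Rightarrow> ('v \<Rightarrow> 'v) \<Rightarrow> ('v \<Rightarrow> 'v) set" where
  "conjf r f R = {R'. bij R' \<and> (\<forall>D\<in>disks r. f (rename_pt R D) = rename R' (f D))}"

end

theory Submission
  imports Defs
begin

lemma re_inv1: "bij R \<Longrightarrow> rename_edge (inv R) (rename_edge R e) = e"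
  unfolding rename_edge_def by (force simp: image_image bij_def inv_f_f)

lemma re_inv2: "bij R \<Longrightarrow> rename_edge R (rename_edge (inv R) e) = e"
proof -
  assume b: "bij R"
  have "\<And>u. R (inv R u) = u" using b by (simp add: bij_def surj_f_inv_f)
  then show ?thesis unfolding rename_edge_def image_image by (simp add: case_prod_beta)
qed

lemma re_inj:
  assumes "bij R" shows "rename_edge R e = rename_edge R e' \<longleftrightarrow> e = e'"
proof
  assume "rename_edge R e = rename_edge R e'"
  then have "rename_edge (inv R) (rename_edge R e) = rename_edge (inv R) (rename_edge R e')" by simp
  then show "e = e'" by (simp only: re_inv1[OF assms])
qed simp

lemma re_mem:
  assumes "bij R" shows "rename_edge R e \<in> rename_edge R ` E \<longleftrightarrow> e \<in> E"
proof
  assume "rename_edge R e \<in> rename_edge R ` E"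
  then obtain e' where "e' \<in> E" "rename_edge R e = rename_edge R e'" by blast
  then show "e \<in> E" by (simp only: re_inj[OF assms])
qed blast

lemma re_pair: "rename_edge R {(a,i),(b,j)} = {(R a,i),(R b,j)}"
  unfolding rename_edge_def by auto

lemma adj_rename:
  assumes "bij R"
  shows "(R u, R v) \<in> adj (rename R G) \<longleftrightarrow> (u, v) \<in> adj G"
proof -
  have h: "{(R u, i), (R v, j)} \<in> rename_edge R ` gE G \<longleftrightarrow> {(u, i), (v, j)} \<in> gE G" for i j
    using re_mem[OF assms, of "{(u, i), (v, j)}" "gE G"] unfolding re_pair .
  have g: "gE (rename R G) = rename_edge R ` gE G" by (simp add: rename_def)
  show ?thesis unfolding adj_def mem_Collect_eq case_prod_conv g h ..
qed

lemma relpow_rename: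
  assumes "bij R"
  shows "(R c, R v) \<in> adj (rename R G) ^^ k \<longleftrightarrow> (c, v) \<in> adj G ^^ k"
proof (induction k arbitrary: v)
  case 0
  have "inj R" using assms by (simp add: bij_def)
  then show ?case by (simp add: inj_eq)
next
  case (Suc k)
  have sR: "\<And>y. R (inv R y) = y" using assms by (simp add: bij_def surj_f_inv_f)
  let ?A = "adj (rename R G)"
  have e1: "(R c, R v) \<in> ?A ^^ Suc k \<longleftrightarrow> (\<exists>y. (R c, y) \<in> ?A ^^ k \<and> (y, R v) \<in> ?A)"
    by (simp add: relcomp_unfold)
  have e2: "(\<exists>y. (R c, y) \<in> ?A ^^ k \<and> (y, R v) \<in> ?A) \<longleftrightarrow>
        (\<exists>y. (R c, R y) \<in> ?A ^^ k \<and> (R y, R v) \<in> ?A)"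
  proof
    assume "\<exists>y. (R c, y) \<in> ?A ^^ k \<and> (y, R v) \<in> ?A"
    then obtain y where "(R c, y) \<in> ?A ^^ k \<and> (y, R v) \<in> ?A" by blast
    then have "(R c, R (inv R y)) \<in> ?A ^^ k \<and> (R (inv R y), R v) \<in> ?A" unfolding sR .
    then show "\<exists>y. (R c, R y) \<in> ?A ^^ k \<and> (R y, R v) \<in> ?A" by blast
  qed blast
  have e3: "(\<exists>y. (R c, R y) \<in> ?A ^^ k \<and> (R y, R v) \<in> ?A) \<longleftrightarrow>
        (\<exists>y. (c, y) \<in> adj G ^^ k \<and> (y, v) \<in> adj G)"
    unfolding Suc adj_rename[OF assms] ..
  have e4: "(c, v) \<in> adj G ^^ Suc k \<longleftrightarrow> (\<exists>y. (c, y) \<in> adj G ^^ k \<and> (y, v) \<in> adj G)"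
    by (simp add: relcomp_unfold)
  show ?case using e1 e2 e3 e4[symmetric] by (rule trans[OF _ trans[OF _ trans]])
qed

lemma ball_rename:
  assumes "bij R"
  shows "ball (rename R G) (R c) n = R ` ball G c n"
proof -
  have s: "surj R" using assms by (simp add: bij_def)
  have "x \<in> ball (rename R G) (R c) n \<longleftrightarrow> x \<in> R ` ball G c n" for x
  proof -
    obtain y where y: "x = R y" using s by (rule surjE)
    have "R y \<in> R ` ball G c n \<longleftrightarrow> y \<in> ball G c n"
      using assms by (auto simp: bij_def inj_eq)
    then show ?thesis using y by (simp add: ball_def relpow_rename[OF assms])
  qed
  then show ?thesis by blast
qed

lemma inv_R_mem: "bij R \<Longrightarrow> x \<in> R ` B \<longleftrightarrow> inv R x \<in> B"
proof -
  assume b: "bij R"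
  then have i: "inj R" and s: "\<And>u. R (inv R u) = u" by (auto simp: bij_def surj_f_inv_f)
  show ?thesis
  proof
    assume "x \<in> R ` B" then obtain y where "y \<in> B" "x = R y" by blast
    then show "inv R x \<in> B" using i by simp
  next
    assume "inv R x \<in> B" then show "x \<in> R ` B" using s[of x] by (metis imageI)
  qed
qed

lemma disk_rename:
  assumes "bij R"
  shows "disk r (rename R G) (R c) = rename_pt R (disk r G c)"
proof -
  define EH where "EH = {e \<in> gE G. \<exists>u i. (u, i) \<in> e \<and> u \<in> ball G c r}"
  have EH': "{e \<in> gE (rename R G). \<exists>u i. (u, i) \<in> e \<and> u \<in> ball (rename R G) (R c) r}
          = rename_edge R ` EH"
  proof -
    have "(\<exists>u i. (u, i) \<in> rename_edge R e \<and> u \<in> R ` ball G c r) \<longleftrightarrow>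
          (\<exists>u i. (u, i) \<in> e \<and> u \<in> ball G c r)" for e
      using assms unfolding rename_edge_def by (auto simp: bij_def inj_eq) force
    note h = this
    have "{e \<in> gE (rename R G). \<exists>u i. (u, i) \<in> e \<and> u \<in> ball (rename R G) (R c) r}
       = {e \<in> rename_edge R ` gE G. \<exists>u i. (u, i) \<in> e \<and> u \<in> R ` ball G c r}"
      unfolding ball_rename[OF assms] by (simp add: rename_def)
    also have "\<dots> = rename_edge R ` {e \<in> gE G. \<exists>u i. (u, i) \<in> rename_edge R e \<and> u \<in> R ` ball G c r}"
      by blast
    also have "\<dots> = rename_edge R ` EH"
      unfolding EH_def h ..
    finally show ?thesis .
  qed
  have mem2: "x \<in> rename_edge R ` EH \<longleftrightarrow> rename_edge (inv R) x \<in> EH" for x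
  proof
    assume "x \<in> rename_edge R ` EH"
    then obtain y where "y \<in> EH" "x = rename_edge R y" by blast
    then show "rename_edge (inv R) x \<in> EH" by (simp add: re_inv1[OF assms])
  next
    assume "rename_edge (inv R) x \<in> EH"
    then have "rename_edge R (rename_edge (inv R) x) \<in> rename_edge R ` EH" by blast
    then show "x \<in> rename_edge R ` EH" by (simp add: re_inv2[OF assms])
  qed
  have D1: "disk r G c = (\<lparr>gV = ball G c (Suc r), gE = EH, gsig = gsig G |` ball G c r,
      gdel = gdel G |` EH\<rparr>, c)"
    unfolding disk_def Let_def EH_def by simp
  have D2: "disk r (rename R G) (R c) = (\<lparr>gV = ball (rename R G) (R c) (Suc r),
      gE = rename_edge R ` EH, gsig = gsig (rename R G) |` ball (rename R G) (R c) r,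
      gdel = gdel (rename R G) |` (rename_edge R ` EH)\<rparr>, R c)"
    unfolding disk_def Let_def EH' by simp
  have s1: "(gsig G \<circ> inv R) |` (R ` ball G c r) = (gsig G |` ball G c r) \<circ> inv R"
    by (rule ext) (simp add: restrict_map_def inv_R_mem[OF assms])
  have s2: "(gdel G \<circ> rename_edge (inv R)) |` (rename_edge R ` EH) = (gdel G |` EH) \<circ> rename_edge (inv R)"
    by (rule ext) (simp add: restrict_map_def mem2)
  have sc: "snd (disk r G c) = c" unfolding D1 by (rule snd_conv)
  have g1: "gsig (rename R G) = gsig G \<circ> inv R" "gdel (rename R G) = gdel G \<circ> rename_edge (inv R)"
    by (simp_all add: rename_def)
  have r1: "rename R (fst (disk r G c)) = \<lparr>gV = R ` ball G c (Suc r), gE = rename_edge R ` EH,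
     gsig = (gsig G |` ball G c r) \<circ> inv R, gdel = (gdel G |` EH) \<circ> rename_edge (inv R)\<rparr>"
    unfolding D1 rename_def by simp
  show ?thesis
    unfolding D2 rename_pt_def r1 ball_rename[OF assms] g1 s1 s2 sc by simp
qed

lemma is_graph_rename:
  assumes "bij R" "is_graph G"
  shows "is_graph (rename R G)"
proof -
  have inj: "inj R" using assms by (simp add: bij_def)
  have e1: "\<forall>e\<in>gE (rename R G). \<exists>a b. a \<noteq> b \<and> e = {a, b} \<and> a \<in> gV (rename R G) \<times> UNIV
             \<and> b \<in> gV (rename R G) \<times> UNIV"
  proof
    fix e assume "e \<in> gE (rename R G)"
    then obtain e0 where e0: "e0 \<in> gE G" "e = rename_edge R e0" by (auto simp: rename_def)
    have GE: "\<forall>e\<in>gE G. \<exists>a b. a \<noteq> b \<and> e = {a, b} \<and> a \<in> gV G \<times> UNIV \<and> b \<in> gV G \<times> UNIV"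
      using assms(2) unfolding is_graph_def by simp
    obtain a b where ab: "a \<noteq> b" "e0 = {a,b}" "a \<in> gV G \<times> UNIV" "b \<in> gV G \<times> UNIV"
      using bspec[OF GE e0(1)] by blast
    obtain a1 a2 b1 b2 where ab2: "a = (a1,a2)" "b = (b1,b2)" by force
    have ee: "e = {(R a1, a2), (R b1, b2)}" using e0(2) ab(2) ab2 by (simp add: re_pair)
    have ne: "(R a1, a2) \<noteq> (R b1, b2)" using ab(1) ab2 inj by (auto simp: inj_eq)
    have m1: "(R a1, a2) \<in> gV (rename R G) \<times> UNIV" using ab(3) ab2 by (simp add: rename_def)
    have m2: "(R b1, b2) \<in> gV (rename R G) \<times> UNIV" using ab(4) ab2 by (simp add: rename_def)
    show "\<exists>a b. a \<noteq> b \<and> e = {a, b} \<and> a \<in> gV (rename R G) \<times> UNIV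
             \<and> b \<in> gV (rename R G) \<times> UNIV"
      using ee ne m1 m2 by blast
  qed
  have e2: "\<forall>e\<in>gE (rename R G). \<forall>e'\<in>gE (rename R G). e \<noteq> e' \<longrightarrow> e \<inter> e' = {}"
  proof (intro ballI impI)
    fix e e' assume "e \<in> gE (rename R G)" "e' \<in> gE (rename R G)" "e \<noteq> e'"
    then obtain e0 e0' where h: "e0 \<in> gE G" "e = rename_edge R e0" "e0' \<in> gE G" "e' = rename_edge R e0'"
      by (auto simp: rename_def)
    have GE: "\<forall>e\<in>gE G. \<forall>e'\<in>gE G. e \<noteq> e' \<longrightarrow> e \<inter> e' = {}"
      using assms(2) unfolding is_graph_def by simp
    have "e0 \<noteq> e0'" using h \<open>e \<noteq> e'\<close> by blast
    then have dis: "e0 \<inter> e0' = {}" using GE h by blast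
    show "e \<inter> e' = {}"
    proof (rule ccontr)
      assume "e \<inter> e' \<noteq> {}"
      then obtain x where "x \<in> e" "x \<in> e'" by blast
      then obtain y y' where y: "y \<in> e0" "x = (R (fst y), snd y)" "y' \<in> e0'" "x = (R (fst y'), snd y')"
        using h unfolding rename_edge_def by auto
      then have "y = y'" using inj by (simp add: inj_eq prod_eq_iff)
      then show False using y dis by blast
    qed
  qed
  have dG: "dom (gsig G) \<subseteq> gV G" "dom (gdel G) \<subseteq> gE G" "countable (gV G)"
    using assms(2) unfolding is_graph_def by simp_all
  have d1: "dom (gsig (rename R G)) \<subseteq> gV (rename R G)"
  proof
    fix x assume "x \<in> dom (gsig (rename R G))"
    then have "inv R x \<in> dom (gsig G)" by (simp add: rename_def dom_def)
    then have "inv R x \<in> gV G" using dG by blast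
    then show "x \<in> gV (rename R G)" by (simp add: rename_def inv_R_mem[OF assms(1)])
  qed
  have d2: "dom (gdel (rename R G)) \<subseteq> gE (rename R G)"
  proof
    fix x assume "x \<in> dom (gdel (rename R G))"
    then have "rename_edge (inv R) x \<in> dom (gdel G)" by (simp add: rename_def dom_def)
    then have "rename_edge (inv R) x \<in> gE G" using dG by blast
    then have "rename_edge R (rename_edge (inv R) x) \<in> rename_edge R ` gE G" by blast
    then show "x \<in> gE (rename R G)" by (simp add: rename_def re_inv2[OF assms(1)])
  qed
  have c: "countable (gV (rename R G))" using dG by (simp add: rename_def)
  show ?thesis unfolding is_graph_def using e1 e2 d1 d2 c by (intro conjI)
qed

definition cons_fam where
  "cons_fam S \<longleftrightarrow> (\<forall>H\<in>S. \<forall>H'\<in>S. (\<forall>x a b. gsig H x = Some a \<and> gsig H' x = Some b \<longrightarrow> a = b)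
      \<and> (\<forall>x a b. gdel H x = Some a \<and> gdel H' x = Some b \<longrightarrow> a = b))"

lemma gunion_sig:
  assumes "cons_fam S" "H0 \<in> S" "gsig H0 x = Some a"
  shows "gsig (gunion S) x = Some a"
proof -
  have ex: "\<exists>H. H \<in> S \<and> gsig H x \<noteq> None" using assms by auto
  define H1 where "H1 = (SOME H. H \<in> S \<and> gsig H x \<noteq> None)"
  have h1: "H1 \<in> S \<and> gsig H1 x \<noteq> None" unfolding H1_def by (rule someI_ex[OF ex])
  then obtain b where b: "gsig H1 x = Some b" by auto
  have "b = a" using assms h1 b unfolding cons_fam_def by blast
  moreover have "gsig (gunion S) x = gsig H1 x" using ex unfolding gunion_def H1_def by auto
  ultimately show ?thesis using b by simp
qed

lemma gunion_del:
  assumes "cons_fam S" "H0 \<in> S" "gdel H0 x = Some a"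
  shows "gdel (gunion S) x = Some a"
proof -
  have ex: "\<exists>H. H \<in> S \<and> gdel H x \<noteq> None" using assms by auto
  define H1 where "H1 = (SOME H. H \<in> S \<and> gdel H x \<noteq> None)"
  have h1: "H1 \<in> S \<and> gdel H1 x \<noteq> None" unfolding H1_def by (rule someI_ex[OF ex])
  then obtain b where b: "gdel H1 x = Some b" by auto
  have "b = a" using assms h1 b unfolding cons_fam_def by blast
  moreover have "gdel (gunion S) x = gdel H1 x" using ex unfolding gunion_def H1_def by auto
  ultimately show ?thesis using b by simp
qed

lemma gunion_sig_None: "(\<forall>H\<in>S. gsig H x = None) \<Longrightarrow> gsig (gunion S) x = None"
  unfolding gunion_def by auto

lemma gunion_del_None: "(\<forall>H\<in>S. gdel H x = None) \<Longrightarrow> gdel (gunion S) x = None"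
  unfolding gunion_def by auto

lemma cons_fam_rename: "cons_fam S \<Longrightarrow> cons_fam (rename R ` S)"
  unfolding cons_fam_def rename_def by auto

lemma gunion_rename:
  assumes "cons_fam S" "bij R"
  shows "gunion (rename R ` S) = rename R (gunion S)"
proof -
  have c: "cons_fam (rename R ` S)" using cons_fam_rename assms by blast
  have sig: "gsig (gunion (rename R ` S)) x = gsig (rename R (gunion S)) x" for x
  proof (cases "\<exists>H\<in>S. gsig H (inv R x) \<noteq> None")
    case True
    then obtain H a where "H \<in> S" "gsig H (inv R x) = Some a" by auto
    moreover have "gsig (rename R H) x = Some a" using calculation by (simp add: rename_def)
    ultimately show ?thesis using gunion_sig[OF c, of "rename R H"] gunion_sig[OF assms(1)]
      by (simp add: rename_def)
  next
    case False
    then show ?thesis using gunion_sig_None[of "rename R ` S" x] gunion_sig_None[of S "inv R x"]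
      by (simp add: rename_def)
  qed
  have del: "gdel (gunion (rename R ` S)) x = gdel (rename R (gunion S)) x" for x
  proof (cases "\<exists>H\<in>S. gdel H (rename_edge (inv R) x) \<noteq> None")
    case True
    then obtain H a where "H \<in> S" "gdel H (rename_edge (inv R) x) = Some a" by auto
    moreover have "gdel (rename R H) x = Some a" using calculation by (simp add: rename_def)
    ultimately show ?thesis using gunion_del[OF c, of "rename R H"] gunion_del[OF assms(1)]
      by (simp add: rename_def)
  next
    case False
    then show ?thesis using gunion_del_None[of "rename R ` S" x] gunion_del_None[of S "rename_edge (inv R) x"]
      by (simp add: rename_def)
  qed
  have v: "gV (gunion (rename R ` S)) = gV (rename R (gunion S))"
    unfolding gunion_def rename_def by auto
  have e: "gE (gunion (rename R ` S)) = gE (rename R (gunion S))"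
    unfolding gunion_def rename_def by auto
  show ?thesis
    by (rule graph.equality) (simp_all add: v e sig del ext)
qed

lemma main_part:
  assumes lr: "local_rule_of F r f" and R: "bij R" and R': "R' \<in> conjf r f R"
  shows "R' \<in> conjF F R"
proof -
  have bR': "bij R'" and cj: "\<forall>D\<in>disks r. f (rename_pt R D) = rename R' (f D)"
    using R' by (auto simp: conjf_def)
  have "F (rename R G) = rename R' (F G)" if G: "is_graph G" for G
  proof -
    have lr0: "local_rule r f" and FF: "\<And>G. is_graph G \<Longrightarrow> F G = cgd_of r f G"
      using lr by (auto simp: local_rule_of_def)
    let ?S = "(\<lambda>u. f (disk r G u)) ` gV G"
    have cons: "\<forall>G u v. is_graph G \<and> u \<in> gV G \<and> v \<in> gV G \<longrightarrow> consistent (f (disk r G u)) (f (disk r G v))"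
      using lr0 unfolding local_rule_def by simp
    have cf: "cons_fam ?S"
      unfolding cons_fam_def
    proof (intro ballI)
      fix H H' assume "H \<in> ?S" "H' \<in> ?S"
      then obtain u v where "u \<in> gV G" "v \<in> gV G" "H = f (disk r G u)" "H' = f (disk r G v)" by blast
      then have "consistent H H'" using cons G by blast
      then show "(\<forall>x a b. gsig H x = Some a \<and> gsig H' x = Some b \<longrightarrow> a = b)
      \<and> (\<forall>x a b. gdel H x = Some a \<and> gdel H' x = Some b \<longrightarrow> a = b)"
        unfolding consistent_def by blast
    qed
    have "F (rename R G) = gunion ((\<lambda>v. f (disk r (rename R G) v)) ` R ` gV G)"
      using FF[OF is_graph_rename[OF R G]] by (simp add: cgd_of_def rename_def)
    also have "\<dots> = gunion ((\<lambda>u. f (rename_pt R (disk r G u))) ` gV G)"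
      by (simp add: image_image disk_rename[OF R])
    also have "\<dots> = gunion (rename R' ` ?S)"
    proof -
      have "u \<in> gV G \<Longrightarrow> f (rename_pt R (disk r G u)) = rename R' (f (disk r G u))" for u
      proof -
        assume u: "u \<in> gV G"
        have "disk r G u \<in> disks r" unfolding disks_def using G u by blast
        then show ?thesis using cj by blast
      qed
      then have "(\<lambda>u. f (rename_pt R (disk r G u))) ` gV G = (\<lambda>u. rename R' (f (disk r G u))) ` gV G"
        by (rule image_cong[OF refl])
      also have "\<dots> = rename R' ` ?S" by (rule image_image[symmetric])
      finally show ?thesis by (rule arg_cong)
    qed
    also have "\<dots> = rename R' (F G)"
      using gunion_rename[OF cf bR'] FF[OF G] by (simp add: cgd_of_def)
    finally show ?thesis .
  qed
  then show ?thesis using bR' by (simp add: conjF_def)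
qed

theorem proposition1p7:
  fixes F :: "('v,'s,'d,'p::finite) graph \<Rightarrow> ('v,'s,'d,'p) graph"
  assumes "uncountable (UNIV :: 'v set)"
    and "is_CGD F"
  shows "(\<forall>R. bij R \<longrightarrow> conjF F R \<noteq> {})
       \<and> (\<forall>r f R. local_rule_of F r f \<and> bij R \<longrightarrow> conjf r f R \<subseteq> conjF F R)"
proof
  show 2: "\<forall>r f R. local_rule_of F r f \<and> bij R \<longrightarrow> conjf r f R \<subseteq> conjF F R"
    using main_part by blast
  show "\<forall>R. bij R \<longrightarrow> conjF F R \<noteq> {}"
  proof (intro allI impI)
    fix R :: "'v \<Rightarrow> 'v" assume R: "bij R"
    obtain r f where lr: "local_rule_of F r f" using assms(2) by (auto simp: is_CGD_def)
    then obtain R' where "bij R'" "\<forall>D\<in>disks r. f (rename_pt R D) = rename R' (f D)"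
      using R by (auto simp: local_rule_of_def local_rule_def)
    then have "R' \<in> conjf r f R" by (simp add: conjf_def)
    then show "conjF F R \<noteq> {}" using main_part[OF lr R] by blast
  qed
qed

end
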